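(* Let $R$ be a unital associative ring and $$A=\begin{pmatrix}1&1&1\\1&a&b\\1&c&d\end{pmatrix}\in\widehat{\cal S},\qquad \Phi^2(A)=\begin{pmatrix}1&1&1\\1&a''&b''\\1&c''&d''\end{pmatrix}.$$ Then $$a''=\zeta^{-1}(d-c)^{-1}(db^{-1}-ca^{-1})(db^{-1}-1)^{-1}(d-1)\zeta,\qquad \zeta=(d-c)^{-1}(c-1)-(b-a)^{-1}(a-1).$$
   Context: $R^*$: units of $R$. $M_3^*(R)$: invertible $3\times3$ matrices; $M_3^\star(R)$: matrices with all entries in $R^*$. $J_1(M)=M^{-1}$; $J_2(M)_{jk}=(M_{kj})^{-1}$; $J=J_2\circ J_1$. $\widehat M_3(R)$: matrices whose first row and column consist of $1$'s. For $A=\{a_{j,k}\}\in M_3^\star(R)$: $\Lambda^L(A)_{j,k}=a_{1,1}a_{j,1}^{-1}a_{j,k}a_{1,k}^{-1}$. $\Phi(A)=J_2(\Lambda^L(A^{-1}))$, $\Phi^2=\Phi\circ\Phi$. ${\cal S}=\{M\in M_3(R):$ all square submatrices of $M$ are invertible and $J_2(M)$ is invertible$\}$, $\widehat{\cal S}={\cal S}\cap\widehat M_3(R)$. *)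

theory Defs
  imports Main
begin

text \<open>Matrices are functions nat => nat => 'a; a 3x3 matrix uses indices 0,1,2
  (0-based; paper index j corresponds to j-1 here).\<close>

definition is_unit :: "'a::ring_1 \<Rightarrow> bool" where
  "is_unit x \<longleftrightarrow> (\<exists>y. x * y = 1 \<and> y * x = 1)"

definition rinv :: "'a::ring_1 \<Rightarrow> 'a" where
  "rinv x = (if is_unit x then (THE y. x * y = 1 \<and> y * x = 1) else 0)"

definition mmult :: "nat \<Rightarrow> (nat \<Rightarrow> nat \<Rightarrow> 'a::ring_1) \<Rightarrow> (nat \<Rightarrow> nat \<Rightarrow> 'a) \<Rightarrow> nat \<Rightarrow> nat \<Rightarrow> 'a" where
  "mmult n M N = (\<lambda>i j. \<Sum>k<n. M i k * N k j)"

definition is_minv :: "nat \<Rightarrow> (nat \<Rightarrow> nat \<Rightarrow> 'a::ring_1) \<Rightarrow> (nat \<Rightarrow> nat \<Rightarrow> 'a) \<Rightarrow> bool" where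
  "is_minv n M N \<longleftrightarrow> (\<forall>i<n. \<forall>j<n. mmult n M N i j = (if i = j then 1 else 0)
                                   \<and> mmult n N M i j = (if i = j then 1 else 0))"

definition minvertible :: "nat \<Rightarrow> (nat \<Rightarrow> nat \<Rightarrow> 'a::ring_1) \<Rightarrow> bool" where
  "minvertible n M \<longleftrightarrow> (\<exists>N. is_minv n M N)"

text \<open>The inverse matrix (its entries with indices < n are uniquely determined).\<close>
definition minv :: "nat \<Rightarrow> (nat \<Rightarrow> nat \<Rightarrow> 'a::ring_1) \<Rightarrow> nat \<Rightarrow> nat \<Rightarrow> 'a" where
  "minv n M = (SOME N. is_minv n M N)"

definition J2 :: "(nat \<Rightarrow> nat \<Rightarrow> 'a::ring_1) \<Rightarrow> nat \<Rightarrow> nat \<Rightarrow> 'a" where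
  "J2 M = (\<lambda>j k. rinv (M k j))"

definition LamL :: "(nat \<Rightarrow> nat \<Rightarrow> 'a::ring_1) \<Rightarrow> nat \<Rightarrow> nat \<Rightarrow> 'a" where
  "LamL A = (\<lambda>j k. A 0 0 * rinv (A j 0) * A j k * rinv (A 0 k))"

definition Phi :: "(nat \<Rightarrow> nat \<Rightarrow> 'a::ring_1) \<Rightarrow> nat \<Rightarrow> nat \<Rightarrow> 'a" where
  "Phi A = J2 (LamL (minv 3 A))"

definition submat :: "(nat \<Rightarrow> nat \<Rightarrow> 'a) \<Rightarrow> nat list \<Rightarrow> nat list \<Rightarrow> nat \<Rightarrow> nat \<Rightarrow> 'a" where
  "submat M rs cs = (\<lambda>i j. M (rs ! i) (cs ! j))"

definition S3 :: "(nat \<Rightarrow> nat \<Rightarrow> 'a::ring_1) set" where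
  "S3 = {M. (\<forall>rs cs. sorted_wrt (<) rs \<and> sorted_wrt (<) cs \<and> length rs = length cs
                    \<and> rs \<noteq> [] \<and> set rs \<subseteq> {..<3} \<and> set cs \<subseteq> {..<3}
                    \<longrightarrow> minvertible (length rs) (submat M rs cs))
            \<and> minvertible 3 (J2 M)}"

definition Mhat3 :: "(nat \<Rightarrow> nat \<Rightarrow> 'a::ring_1) set" where
  "Mhat3 = {M. \<forall>i<3. M 0 i = 1 \<and> M i 0 = 1}"

definition Shat3 :: "(nat \<Rightarrow> nat \<Rightarrow> 'a::ring_1) set" where
  "Shat3 = S3 \<inter> Mhat3"

end

theory Submission
  imports Defs
begin

lemma unitI: "x * y = 1 \<Longrightarrow> y * x = 1 \<Longrightarrow> is_unit x"
  unfolding is_unit_def by blast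

lemma rinv_eq:
  fixes x y :: "'a::ring_1"
  assumes "x * y = 1" "y * x = 1" shows "rinv x = y"
proof -
  have u: "is_unit x" using assms unitI by blast
  have "(THE y. x * y = 1 \<and> y * x = 1) = y"
  proof (rule the_equality)
    show "x * y = 1 \<and> y * x = 1" using assms by simp
    fix z assume z: "x * z = 1 \<and> z * x = 1"
    have "z = z * (x * y)" using assms by simp
    also have "\<dots> = (z*x)*y" by (simp add: mult.assoc)
    also have "\<dots> = y" using z by simp
    finally show "z = y" .
  qed
  thus ?thesis using u unfolding rinv_def by simp
qed

lemma unit_rinv:
  fixes x :: "'a::ring_1"
  assumes "is_unit x" shows "x * rinv x = 1" "rinv x * x = 1"
proof -
  obtain y where "x * y = 1" "y * x = 1" using assms unfolding is_unit_def by blast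
  then have "rinv x = y" by (rule rinv_eq)
  then show "x * rinv x = 1" "rinv x * x = 1" using \<open>x * y = 1\<close> \<open>y * x = 1\<close> by auto
qed

lemma unit_rinv2:
  fixes x :: "'a::ring_1"
  assumes "is_unit x" shows "x * (rinv x * z) = z" "rinv x * (x * z) = z"
  using unit_rinv[OF assms] by (simp_all add: mult.assoc[symmetric])

lemma unit_mult: fixes x y :: "'a::ring_1"
  assumes "is_unit x" "is_unit y" shows "is_unit (x*y)" "rinv (x*y) = rinv y * rinv x"
proof -
  have 1: "(x*y) * (rinv y * rinv x) = 1"
    by (simp add: mult.assoc unit_rinv2 assms unit_rinv)
  have 2: "(rinv y * rinv x) * (x*y) = 1"
    by (simp add: mult.assoc unit_rinv2 assms unit_rinv)
  show "is_unit (x*y)" using 1 2 unitI by blast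
  show "rinv (x*y) = rinv y * rinv x" using 1 2 rinv_eq by blast
qed

lemma unit_rinv_unit: fixes x :: "'a::ring_1"
  assumes "is_unit x" shows "is_unit (rinv x)" "rinv (rinv x) = x"
  using unit_rinv[OF assms] unitI rinv_eq by blast+

lemma unit_neg: fixes x :: "'a::ring_1"
  assumes "is_unit x" shows "is_unit (-x)" "rinv (-x) = - rinv x"
  using unit_rinv[OF assms] unitI[of "-x" "- rinv x"] rinv_eq[of "-x" "- rinv x"] by auto

lemma unit_one: "is_unit (1::'a::ring_1)" "rinv (1::'a) = 1"
  using unitI[of 1 1] rinv_eq[of 1 1] by auto

lemma unit_eqI: fixes x y :: "'a::ring_1"
  assumes "x * y = 1" "y * x = 1" shows "is_unit x" "rinv x = y"
  using assms unitI rinv_eq by blast+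

lemma mm3: "mmult 3 M N i j = M i 0 * N 0 j + M i 1 * N 1 j + M i 2 * N 2 j"
  by (simp add: mmult_def numeral_3_eq_3 lessThan_Suc add.assoc numeral_2_eq_2)
lemma mm2: "mmult 2 M N i j = M i 0 * N 0 j + M i 1 * N 1 j"
  by (simp add: mmult_def numeral_2_eq_2 lessThan_Suc)
lemma mm1: "mmult 1 M N i j = M i 0 * N 0 j"
  by (simp add: mmult_def)

lemma minvertible_minv: "minvertible n M \<Longrightarrow> is_minv n M (minv n M)"
  unfolding minvertible_def minv_def by (metis someI_ex)

lemma sum3_eq: fixes a b c :: "'a::ab_group_add" assumes "a + b + c = k" shows "a = k - b - c"
proof -
  have "a = (a+b+c) - b - c" by simp
  thus ?thesis using assms by simp
qed

lemma core:
  fixes \<alpha> \<beta> \<gamma> \<delta> za zb zc zd ze zf zg :: "'a::ring_1"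
  assumes us: "is_unit (\<delta> - 1)" and ub: "is_unit (\<delta> - \<beta>)" and uc: "is_unit (\<delta> - \<gamma>)"
  and e1: "zc + zd + ze = 0" and e2: "zc + zd*\<alpha> + ze*\<gamma> = 1" and e3: "zc + zd*\<beta> + ze*\<delta> = 0"
  and f1: "zb + zd + zg = 0" and f2: "zb + \<alpha>*zd + \<beta>*zg = 1" and f3: "zb + \<gamma>*zd + \<delta>*zg = 0"
  and g1: "za + zc + zf = 1" and g3: "za + \<gamma>*zc + \<delta>*zf = 0"
  shows "is_unit zd \<and> rinv zd = (\<alpha>-1) - (\<beta>-1)*rinv(\<delta>-1)*(\<gamma>-1)
     \<and> zc = - (zd*(\<delta>-\<beta>)*rinv(\<delta>-1)) \<and> zb = - (rinv(\<delta>-1)*(\<delta>-\<gamma>)*zd)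
     \<and> is_unit zc \<and> is_unit zb \<and> zb * rinv zd * zc = za - rinv(\<delta>-1)*\<delta>"
proof -
  define si where "si = rinv (\<delta>-1)"
  have s1: "(\<delta>-1)*si = 1" "si*(\<delta>-1) = 1" using unit_rinv[OF us] si_def by auto
  have s1': "si * \<delta> = 1 + si" "\<delta> * si = 1 + si" using s1 by (simp_all add: algebra_simps)
  define \<tau> where "\<tau> = (\<alpha>-1) - (\<beta>-1)*si*(\<gamma>-1)"
  have e1': "zc = - zd - ze" using sum3_eq[OF e1] by simp
  have h1: "zd*(\<alpha>-1) + ze*(\<gamma>-1) = 1" using e2 unfolding e1' by (simp add: algebra_simps)
  have h2: "zd*(\<beta>-1) + ze*(\<delta>-1) = 0" using e3 unfolding e1' by (simp add: algebra_simps)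
  have ze: "ze = - (zd*(\<beta>-1)*si)"
  proof -
    have a: "ze*(\<delta>-1) = - (zd*(\<beta>-1))" using h2 by (simp add: eq_neg_iff_add_eq_0 add.commute)
    have "ze = ze*(\<delta>-1)*si" using s1 by (simp add: mult.assoc)
    also have "\<dots> = - (zd*(\<beta>-1)*si)" unfolding a by simp
    finally show ?thesis .
  qed
  have t1: "zd * \<tau> = 1" unfolding \<tau>_def using h1 ze by (simp add: algebra_simps)
  have f1': "zb = - zd - zg" using sum3_eq[OF f1] by simp
  have k1: "(\<alpha>-1)*zd + (\<beta>-1)*zg = 1" using f2 unfolding f1' by (simp add: algebra_simps)
  have k2: "(\<gamma>-1)*zd + (\<delta>-1)*zg = 0" using f3 unfolding f1' by (simp add: algebra_simps)
  have zg: "zg = - (si*(\<gamma>-1)*zd)"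
  proof -
    have a: "(\<delta>-1)*zg = - ((\<gamma>-1)*zd)" using k2 by (simp add: eq_neg_iff_add_eq_0 add.commute)
    have "zg = si*((\<delta>-1)*zg)" using s1 by (simp add: mult.assoc[symmetric])
    also have "\<dots> = - (si*(\<gamma>-1)*zd)" unfolding a by (simp add: mult.assoc)
    finally show ?thesis .
  qed
  have t2: "\<tau> * zd = 1" unfolding \<tau>_def using k1 zg by (simp add: algebra_simps)
  have u11: "is_unit zd" "rinv zd = \<tau>" using unit_eqI[OF t1 t2] by auto
  have zc: "zc = - (zd*(\<delta>-\<beta>)*si)"
  proof -
    have "zc = - zd - ze" using e1' by simp
    also have "\<dots> = - (zd*((\<delta>-1)*si) - zd*(\<beta>-1)*si)" using ze s1 by simp
    also have "\<dots> = - (zd*(\<delta>-\<beta>)*si)" by (simp add: algebra_simps)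
    finally show ?thesis .
  qed
  have zb: "zb = - (si*(\<delta>-\<gamma>)*zd)"
  proof -
    have "zb = - zd - zg" using f1' by simp
    also have "\<dots> = - ((si*(\<delta>-1))*zd - si*(\<gamma>-1)*zd)" using zg s1 by simp
    also have "\<dots> = - (si*(\<delta>-\<gamma>)*zd)" by (simp add: algebra_simps)
    finally show ?thesis .
  qed
  have usi: "is_unit si" using unit_rinv_unit[OF us] si_def by auto
  have u10: "is_unit zc" unfolding zc using u11 ub usi by (intro unit_neg unit_mult) auto
  have u01: "is_unit zb" unfolding zb using u11 uc usi by (intro unit_neg unit_mult) auto
  have g1': "za = 1 - zc - zf" using sum3_eq[OF g1] by simp
  have g: "(\<gamma>-1)*zc + (\<delta>-1)*zf = -1" using g3 unfolding g1' by (simp add: algebra_simps)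
  have zf: "zf = - si - si*(\<gamma>-1)*zc"
  proof -
    have "zf = si*((\<delta>-1)*zf)" using s1 by (simp add: mult.assoc[symmetric])
    also have "(\<delta>-1)*zf = -1 - (\<gamma>-1)*zc" using g by (metis add_diff_cancel_left')
    finally show ?thesis by (simp add: algebra_simps)
  qed
  have za: "za - si*\<delta> = - (si*(\<delta>-\<gamma>)*zc)"
  proof -
    have "za = 1 - zc - zf" using g1' .
    also have "\<dots> = 1 + si - zc + si*(\<gamma>-1)*zc" using zf by simp
    finally have "za - si*\<delta> = - zc + si*(\<gamma>-1)*zc" using s1' by simp
    also have "\<dots> = - ((si*(\<delta>-1))*zc) + si*(\<gamma>-1)*zc" using s1 by simp
    also have "\<dots> = - (si*(\<delta>-\<gamma>)*zc)" by (simp add: algebra_simps)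
    finally show ?thesis .
  qed
  have fin: "zb * rinv zd * zc = za - si*\<delta>"
  proof -
    have "zb * rinv zd * zc = - (si*(\<delta>-\<gamma>)*(zd*\<tau>)*zc)" using zb u11 by (simp add: mult.assoc)
    also have "\<dots> = za - si*\<delta>" using t1 za by simp
    finally show ?thesis .
  qed
  show ?thesis using u11 zc zb u10 u01 fin unfolding si_def \<tau>_def by auto
qed

lemma all3: "(\<forall>i<(3::nat). P i) = (P 0 \<and> P 1 \<and> P 2)"
  by (auto simp: numeral_3_eq_3 numeral_2_eq_2 less_Suc_eq)

lemma schur2s:
  fixes x y z w n01 n10 n11 :: "'a::ring_1"
  assumes ux: "is_unit x"
  and h1: "x*n01 + y*n11 = 0" and h2: "z*n01 + w*n11 = 1"
  and h3: "n10*x + n11*z = 0" and h4: "n10*y + n11*w = 1"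
  shows "is_unit (w - z * rinv x * y)" "rinv (w - z * rinv x * y) = n11"
proof -
  have a: "x*n01 = - (y*n11)" using h1 by (simp add: eq_neg_iff_add_eq_0)
  have n01: "n01 = - (rinv x * y * n11)"
  proof -
    have "n01 = rinv x * (x * n01)" using unit_rinv2[OF ux] by simp
    also have "\<dots> = - (rinv x * y * n11)" unfolding a by (simp add: mult.assoc)
    finally show ?thesis .
  qed
  have b: "n10*x = - (n11*z)" using h3 by (simp add: eq_neg_iff_add_eq_0)
  have n10: "n10 = - (n11 * z * rinv x)"
  proof -
    have "n10 = (n10 * x) * rinv x" using unit_rinv[OF ux] by (simp add: mult.assoc)
    also have "\<dots> = - (n11 * z * rinv x)" unfolding b by (simp add: mult.assoc)
    finally show ?thesis .
  qed
  have 1: "(w - z * rinv x * y) * n11 = 1" using h2 unfolding n01 by (simp add: algebra_simps)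
  have 2: "n11 * (w - z * rinv x * y) = 1" using h4 unfolding n10 by (simp add: algebra_simps)
  show "is_unit (w - z * rinv x * y)" "rinv (w - z * rinv x * y) = n11" using unit_eqI[OF 1 2] by auto
qed

text \<open>Explicit inverse of a hat matrix from the inverse of its reduced 2x2 block.\<close>
lemma hat_inv_from2:
  fixes p q r s na nb nc nd :: "'a::ring_1"
  assumes M00: "M 0 0 = 1" and M01: "M 0 1 = 1" and M02: "M 0 2 = 1" and M10: "M 1 0 = 1" and M20: "M 2 0 = 1"
  and M11: "M 1 1 = 1 + p" and M12: "M 1 2 = 1 + q" and M21: "M 2 1 = 1 + r" and M22: "M 2 2 = 1 + s"
  and e1: "p*na = 1 - q*nc" and e2: "p*nb = - (q*nd)" and e3: "r*na = - (s*nc)" and e4: "r*nb = 1 - s*nd"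
  and e5: "na*p = 1 - nb*r" and e6: "na*q = - (nb*s)" and e7: "nc*p = - (nd*r)" and e8: "nc*q = 1 - nd*s"
  shows "minvertible 3 M"
proof -
  define N where "N = (\<lambda>(i::nat) (j::nat). if i = 0 then (if j = 0 then 1 + na + nb + nc + nd
        else if j = 1 then - (na + nc) else - (nb + nd))
     else if i = 1 then (if j = 0 then - (na + nb) else if j = 1 then na else nb)
     else (if j = 0 then - (nc + nd) else if j = 1 then nc else nd))"
  have "is_minv 3 M N"
    unfolding is_minv_def all3 mm3
    by (simp add: N_def M00 M01 M02 M10 M20 M01[unfolded One_nat_def] M10[unfolded One_nat_def] M11 M12 M21 M22 M11[unfolded One_nat_def] M12[unfolded One_nat_def] M21[unfolded One_nat_def] algebra_simps e1 e2 e3 e4 e5 e6 e7 e8)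
  thus ?thesis unfolding minvertible_def by blast
qed

lemma hat_inv:
  fixes p q r s :: "'a::ring_1"
  assumes M00: "M 0 0 = 1" and M01: "M 0 1 = 1" and M02: "M 0 2 = 1" and M10: "M 1 0 = 1" and M20: "M 2 0 = 1"
  and M11: "M 1 1 = 1 + p" and M12: "M 1 2 = 1 + q" and M21: "M 2 1 = 1 + r" and M22: "M 2 2 = 1 + s"
  and us: "is_unit s" and ut: "is_unit (p - q * rinv s * r)"
  shows "minvertible 3 M"
proof -
  define si where "si = rinv s"
  define ti where "ti = rinv (p - q * si * r)"
  have s1: "s * si = 1" "si * s = 1" using unit_rinv[OF us] si_def by auto
  have t1: "(p - q * si * r) * ti = 1" "ti * (p - q * si * r) = 1" using unit_rinv[OF ut] si_def ti_def by auto
  have s2: "s * (si * z) = z" "si * (s * z) = z" for z using s1 by (simp_all add: mult.assoc[symmetric])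
  have t1': "p * ti = 1 + q * si * r * ti" "ti * p = 1 + ti * q * si * r" using t1 by (simp_all add: algebra_simps)
  have t2: "p * (ti * z) = z + q * (si * (r * (ti * z)))" "ti * (p * z) = z + ti * (q * (si * (r * z)))" for z
  proof -
    have "p * (ti * z) = (p*ti)*z" by (simp add: mult.assoc)
    also have "\<dots> = z + q * (si * (r * (ti * z)))" unfolding t1' by (simp add: algebra_simps)
    finally show "p * (ti * z) = z + q * (si * (r * (ti * z)))" .
    have "ti * (p * z) = (ti*p)*z" by (simp add: mult.assoc)
    also have "\<dots> = z + ti * (q * (si * (r * z)))" unfolding t1' by (simp add: algebra_simps)
    finally show "ti * (p * z) = z + ti * (q * (si * (r * z)))" .
  qed
  show ?thesis
  proof (rule hat_inv_from2[where na = ti and nb = "- (ti*q*si)"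
      and nc = "- (si*r*ti)" and nd = "si + si*r*ti*q*si", OF M00 M01 M02 M10 M20 M11 M12 M21 M22])
    show "p * ti = 1 - q * - (si * r * ti)" using t1' by (simp add: mult.assoc)
    show "p * - (ti * q * si) = - (q * (si + si * r * ti * q * si))"
      by (simp add: algebra_simps s2 t2)
    show "r * ti = - (s * - (si * r * ti))" by (simp add: mult.assoc s2)
    show "r * - (ti * q * si) = 1 - s * (si + si * r * ti * q * si)"
      by (simp add: algebra_simps s2 s1)
    show "ti * p = 1 - - (ti * q * si) * r" using t1' by (simp add: mult.assoc)
    show "ti * q = - (- (ti * q * si) * s)" by (simp add: mult.assoc s1)
    show "- (si * r * ti) * p = - ((si + si * r * ti * q * si) * r)"
      by (simp add: algebra_simps t2 t1')
    show "- (si * r * ti) * q = 1 - (si + si * r * ti * q * si) * s"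
      by (simp add: algebra_simps s1 mult.assoc)
  qed
qed

lemma K2:
  fixes a c ai dci bai :: "'a::ring_1"
  assumes "a*ai = 1" "ai*a = 1"
  shows "dci*(c-1) - bai*(a-1) - (dci*c - bai*a)*ai*(a-1) = dci*(c-a)*ai"
proof -
  have r: "ai*(a*z) = z" "a*(ai*z) = z" for z using assms by (simp_all add: mult.assoc[symmetric])
  show ?thesis by (simp add: algebra_simps assms r)
qed

lemma K5:
  fixes a c ai pi ri :: "'a::ring_1"
  assumes "a*ai = 1" "ai*a = 1" "(a-1)*pi = 1" "pi*(a-1) = 1" "(c-1)*ri = 1" "ri*(c-1) = 1"
  shows "(c-1)*(ri - pi)*ai*(a-1) = (a-c)*ai"
proof -
  have r: "ai*(a*z) = z" "a*(ai*z) = z" for z using assms by (simp_all add: mult.assoc[symmetric])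
  have c1: "c*ri = 1 + ri" using assms(5) by (simp add: algebra_simps)
  have c2: "c*(ri*z) = z + ri*z" for z using c1 by (metis distrib_right mult.assoc mult_1_left)
  have p1: "pi*a = 1 + pi" using assms(4) by (simp add: algebra_simps)
  have pa: "pi*ai = pi - ai"
  proof -
    have "pi*ai = pi*(a - (a-1))*ai" by simp
    also have "\<dots> = pi*a*ai - pi*(a-1)*ai" by (simp add: algebra_simps)
    also have "\<dots> = pi - ai" using assms by (simp add: mult.assoc)
    finally show ?thesis .
  qed
  have pa2: "pi*(ai*z) = pi*z - ai*z" for z using pa by (metis left_diff_distrib mult.assoc)
  show ?thesis by (simp add: algebra_simps assms r c1 c2 pa pa2 p1)
qed

lemma dist4: fixes x u v y z :: "'a::ring" shows "x*(u-v)*y*z = x*u*y*z - x*v*y*z"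
  by (simp add: algebra_simps)
lemma dist3: fixes x y u v :: "'a::ring" shows "x*y*(u-v) = x*y*u - x*y*v"
  by (simp add: algebra_simps)

lemma K3:
  fixes a b c d ai si ri qi dci dbi :: "'a::ring_1"
  assumes a1: "a*ai = 1" "ai*a = 1" and s1: "(d-1)*si = 1" "si*(d-1) = 1"
    and r1: "(c-1)*ri = 1" and q1: "(b-1)*qi = 1" "qi*(b-1) = 1"
    and dc: "dci*(d-c) = 1" and db: "(d-b)*dbi = 1"
  shows "1 - dci*(d - c*ai*b)*dbi*(d-1) = dci*(c-1)*(si*d - ri*c*ai*(a-1)*qi*b)*(b-1)*dbi*(d-1)"
proof -
  define W where "W = d + (c-1)*si*d*(b-1) - c*b"
  have i: "(d-c)*si*(d-b) = W"
  proof -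
    have e1: "si*d = 1 + si" using s1 by (simp add: algebra_simps)
    have e1': "si*(d*z) = z + si*z" for z using e1 by (metis distrib_right mult.assoc mult_1_left)
    have "(d-c)*si*(d-b) = ((d-1) - (c-1))*si*(d-b)" by simp
    also have "\<dots> = (d-1)*si*(d-b) - (c-1)*si*(d-b)" by (simp add: algebra_simps)
    also have "\<dots> = (d-b) - (c-1)*si*(d-b)" using s1 by simp
    also have "\<dots> = W" unfolding W_def using e1 by (simp add: algebra_simps e1')
    finally show ?thesis .
  qed
  have qb: "qi*b*(b-1) = b"
  proof -
    have "qi*b*(b-1) = qi*(b-1)*b" by (simp add: algebra_simps)
    thus ?thesis using q1 by simp
  qed
  have ii: "(d - c*ai*b) + (c-1)*(si*d - ri*c*ai*(a-1)*qi*b)*(b-1) = W"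
  proof -
    have "(c-1)*(ri*c*ai*(a-1)*qi*b)*(b-1) = ((c-1)*ri)*c*ai*(a-1)*(qi*b*(b-1))" by (simp add: mult.assoc)
    also have "\<dots> = c*ai*(a-1)*b" using r1 qb by simp
    also have "\<dots> = c*b - c*ai*b" using a1 by (simp add: algebra_simps)
    finally have h: "(c-1)*(ri*c*ai*(a-1)*qi*b)*(b-1) = c*b - c*ai*b" .
    have "(d - c*ai*b) + (c-1)*(si*d - ri*c*ai*(a-1)*qi*b)*(b-1)
        = d - c*ai*b + (c-1)*si*d*(b-1) - (c-1)*(ri*c*ai*(a-1)*qi*b)*(b-1)"
      by (simp add: algebra_simps)
    also have "\<dots> = W" unfolding h W_def by (simp add: algebra_simps)
    finally show ?thesis .
  qed
  define T where "T = (c-1)*(si*d - ri*c*ai*(a-1)*qi*b)*(b-1)"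
  have T: "T = W - (d - c*ai*b)" using ii unfolding T_def[symmetric] by (simp add: eq_diff_eq add.commute)
  have "dci*(c-1)*(si*d - ri*c*ai*(a-1)*qi*b)*(b-1)*dbi*(d-1) = dci*T*dbi*(d-1)"
    unfolding T_def by (simp only: mult.assoc)
  also have "\<dots> = dci*W*dbi*(d-1) - dci*(d - c*ai*b)*dbi*(d-1)"
    unfolding T by (rule dist4)
  also have "dci*W*dbi*(d-1) = 1"
  proof -
    have "dci*W*dbi*(d-1) = (dci*(d-c))*si*((d-b)*dbi)*(d-1)" unfolding i[symmetric] by (simp add: mult.assoc)
    also have "\<dots> = 1" using dc db s1 by simp
    finally show ?thesis .
  qed
  finally show ?thesis by simp
qed

lemma K4:
  fixes a b c d ai si ri qi pi dci dbi bai :: "'a::ring_1"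
  assumes a1: "a*ai = 1" "ai*a = 1" and s1: "(d-1)*si = 1" "si*(d-1) = 1"
    and r1: "(c-1)*ri = 1" and q1: "(b-1)*qi = 1" "qi*(b-1) = 1"
    and p1: "(a-1)*pi = 1" "pi*(a-1) = 1"
    and dc: "dci*(d-c) = 1" "(d-c)*dci = 1" and db: "(d-b)*dbi = 1" "dbi*(d-b) = 1"
    and ba: "bai*(b-a) = 1"
  shows "(b-1)*dbi*(d-1)*(dci*c - bai*a)*ai*(a-1)*(qi - pi)
       = 1 - (b-1)*dbi*(d-1)*dci*(c-1)*(si*d - ri*c*ai*(a-1)*qi*b)"
proof -
  have Y: "(dci*c - bai*a)*ai*(a-1)*(qi - pi) = dci*c*ai*(a-1)*(qi-pi) + qi"
  proof -
    have "bai*a*ai*(a-1)*(qi-pi) = bai*((a-1)*qi - (a-1)*pi)" using a1 by (simp add: algebra_simps)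
    also have "\<dots> = bai*((a-1)*qi - (b-1)*qi)" using p1 q1 by simp
    also have "\<dots> = - ((bai*(b-a))*qi)" by (simp add: algebra_simps)
    also have "\<dots> = - qi" using ba by simp
    finally have "bai*a*ai*(a-1)*(qi-pi) = - qi" .
    thus ?thesis by (simp add: algebra_simps)
  qed
  define E where "E = c*ai*(a-1)*(qi-pi) + (c-1)*si*d - c*ai*(a-1)*qi*b"
  have E0: "E + (d-c)*si = 0"
  proof -
    have e1: "(d-c)*si + (c-1)*si*d = c"
    proof -
      have "(d-c)*si + (c-1)*si*d = ((d-1) - (c-1))*si + (c-1)*si*((d-1) + 1)" by simp
      also have "\<dots> = (d-1)*si + (c-1)*(si*(d-1))" by (simp add: algebra_simps)
      also have "\<dots> = c" using s1 by simp
      finally show ?thesis .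
    qed
    have e2: "ai*(a-1)*qi*b = ai*(a-1)*qi + ai*(a-1)"
    proof -
      have "ai*(a-1)*qi*b = ai*(a-1)*qi*((b-1) + 1)" by simp
      also have "\<dots> = ai*(a-1)*(qi*(b-1)) + ai*(a-1)*qi" by (simp only: mult.assoc distrib_left mult_1_right)
      finally show ?thesis using q1 by (simp add: add.commute)
    qed
    have e3: "ai*(a-1)*pi = ai" using p1 by (simp add: mult.assoc)
    have "E + (d-c)*si = c*(ai*(a-1)*qi - ai*(a-1)*pi) + ((d-c)*si + (c-1)*si*d) - c*(ai*(a-1)*qi*b)"
      unfolding E_def by (simp add: algebra_simps)
    also have "\<dots> = c*(ai*(a-1)*qi - ai) + c - c*(ai*(a-1)*qi + ai*(a-1))"
      unfolding e1 e2 e3 by simp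
    also have "\<dots> = c*(1 - ai*a)" by (simp add: algebra_simps)
    also have "\<dots> = 0" using a1 by simp
    finally show ?thesis .
  qed
  have E1: "dci*E + si = 0"
  proof -
    have dc2: "dci*((d-c)*z) = z" for z using dc by (simp add: mult.assoc[symmetric])
    have "dci*E + si = dci*(E + (d-c)*si)" by (simp add: distrib_left dc2)
    thus ?thesis using E0 by simp
  qed
  have iii: "(dci*c - bai*a)*ai*(a-1)*(qi - pi) = si*(d-b)*qi - dci*(c-1)*(si*d - ri*c*ai*(a-1)*qi*b)"
  proof -
    have x: "si*(d-b)*qi = qi - si"
    proof -
      have "si*(d-b)*qi = si*((d-1) - (b-1))*qi" by simp
      also have "\<dots> = (si*(d-1))*qi - si*((b-1)*qi)" by (simp add: algebra_simps)
      also have "\<dots> = qi - si" using s1 q1 by simp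
      finally show ?thesis .
    qed
    have y: "dci*(c-1)*(si*d - ri*c*ai*(a-1)*qi*b) = dci*(c-1)*si*d - dci*c*ai*(a-1)*qi*b"
    proof -
      have "dci*(c-1)*(ri*c*ai*(a-1)*qi*b) = dci*((c-1)*ri)*c*ai*(a-1)*qi*b" by (simp add: mult.assoc)
      also have "\<dots> = dci*c*ai*(a-1)*qi*b" by (simp only: r1 mult_1_right)
      finally have h: "dci*(c-1)*(ri*c*ai*(a-1)*qi*b) = dci*c*ai*(a-1)*qi*b" .
      show ?thesis using dist3[of dci "c-1" "si*d" "ri*c*ai*(a-1)*qi*b"] unfolding h by (simp add: mult.assoc)
    qed
    have "dci*c*ai*(a-1)*(qi-pi) + qi - ((qi - si) - (dci*(c-1)*si*d - dci*c*ai*(a-1)*qi*b)) = dci*E + si"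
      unfolding E_def by (simp add: algebra_simps)
    then have "dci*c*ai*(a-1)*(qi-pi) + qi - ((qi - si) - (dci*(c-1)*si*d - dci*c*ai*(a-1)*qi*b)) = 0"
      using E1 by simp
    then show ?thesis unfolding Y x y by simp
  qed
  have "(b-1)*dbi*(d-1)*(dci*c - bai*a)*ai*(a-1)*(qi - pi)
     = (b-1)*dbi*(d-1)*((dci*c - bai*a)*ai*(a-1)*(qi - pi))" by (simp add: mult.assoc)
  also have "\<dots> = (b-1)*dbi*((d-1)*si)*(d-b)*qi - (b-1)*dbi*(d-1)*dci*(c-1)*(si*d - ri*c*ai*(a-1)*qi*b)"
    unfolding iii by (simp add: algebra_simps)
  also have "(b-1)*dbi*((d-1)*si)*(d-b)*qi = 1"
  proof -
    have "(b-1)*dbi*((d-1)*si)*(d-b)*qi = (b-1)*(dbi*(d-b))*qi" using s1 by (simp add: mult.assoc)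
    thus ?thesis using db q1 by simp
  qed
  finally show ?thesis .
qed

lemma unit_from1: fixes M :: "nat \<Rightarrow> nat \<Rightarrow> 'a::ring_1"
  assumes "minvertible 1 M" shows "is_unit (M 0 0)"
proof -
  obtain N where N: "is_minv 1 M N" using assms unfolding minvertible_def by blast
  have "M 0 0 * N 0 0 = 1" "N 0 0 * M 0 0 = 1" using N unfolding is_minv_def mm1 by auto
  thus ?thesis using unitI by blast
qed

lemma unit_from2: fixes M :: "nat \<Rightarrow> nat \<Rightarrow> 'a::ring_1"
  assumes "minvertible 2 M" "is_unit (M 0 0)" shows "is_unit (M 1 1 - M 1 0 * rinv (M 0 0) * M 0 1)"
proof -
  obtain N where N: "is_minv 2 M N" using assms unfolding minvertible_def by blast
  have h: "\<And>i j. i < 2 \<Longrightarrow> j < 2 \<Longrightarrow> mmult 2 M N i j = (if i = j then 1 else 0) \<and> mmult 2 N M i j = (if i = j then 1 else 0)"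
    using N unfolding is_minv_def by blast
  have 1: "M 0 0 * N 0 1 + M 0 1 * N 1 1 = 0" using h[of 0 1] unfolding mm2 by simp
  have 2: "M 1 0 * N 0 1 + M 1 1 * N 1 1 = 1" using h[of 1 1] unfolding mm2 by simp
  have 3: "N 1 0 * M 0 0 + N 1 1 * M 1 0 = 0" using h[of 1 0] unfolding mm2 by simp
  have 4: "N 1 0 * M 0 1 + N 1 1 * M 1 1 = 1" using h[of 1 1] unfolding mm2 by simp
  show ?thesis using schur2s(1)[OF assms(2) 1 2 3 4] .
qed

lemma hat_eqs: fixes M N :: "nat \<Rightarrow> nat \<Rightarrow> 'a::ring_1"
  assumes N: "is_minv 3 M N"
  and M00: "M 0 0 = 1" and M01: "M 0 1 = 1" and M02: "M 0 2 = 1" and M10: "M 1 0 = 1" and M20: "M 2 0 = 1"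
  and M11: "M 1 1 = \<alpha>" and M12: "M 1 2 = \<beta>" and M21: "M 2 1 = \<gamma>" and M22: "M 2 2 = \<delta>"
  shows "\<And>j. j < 3 \<Longrightarrow> N 0 j + N 1 j + N 2 j = (if j = 0 then 1 else 0)"
    "\<And>j. j < 3 \<Longrightarrow> N 0 j + \<alpha> * N 1 j + \<beta> * N 2 j = (if j = 1 then 1 else 0)"
    "\<And>j. j < 3 \<Longrightarrow> N 0 j + \<gamma> * N 1 j + \<delta> * N 2 j = (if j = 2 then 1 else 0)"
    "\<And>i. i < 3 \<Longrightarrow> N i 0 + N i 1 + N i 2 = (if i = 0 then 1 else 0)"
    "\<And>i. i < 3 \<Longrightarrow> N i 0 + N i 1 * \<alpha> + N i 2 * \<gamma> = (if i = 1 then 1 else 0)"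
    "\<And>i. i < 3 \<Longrightarrow> N i 0 + N i 1 * \<beta> + N i 2 * \<delta> = (if i = 2 then 1 else 0)"
proof -
  note Ms = M00 M01 M02 M10 M20 M11 M12 M21 M22 M01[unfolded One_nat_def] M10[unfolded One_nat_def]
     M11[unfolded One_nat_def] M12[unfolded One_nat_def] M21[unfolded One_nat_def]
  have h: "\<And>i j. i < 3 \<Longrightarrow> j < 3 \<Longrightarrow> mmult 3 M N i j = (if i = j then 1 else 0) \<and> mmult 3 N M i j = (if i = j then 1 else 0)"
    using N unfolding is_minv_def by blast
  fix j :: nat assume j: "j < 3"
  show "N 0 j + N 1 j + N 2 j = (if j = 0 then 1 else 0)" using h[of 0 j] j unfolding mm3 by (simp add: Ms)
  show "N 0 j + \<alpha> * N 1 j + \<beta> * N 2 j = (if j = 1 then 1 else 0)" using h[of 1 j] j unfolding mm3 by (simp add: Ms)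
  show "N 0 j + \<gamma> * N 1 j + \<delta> * N 2 j = (if j = 2 then 1 else 0)" using h[of 2 j] j unfolding mm3 by (simp add: Ms)
next
  note Ms = M00 M01 M02 M10 M20 M11 M12 M21 M22 M01[unfolded One_nat_def] M10[unfolded One_nat_def]
     M11[unfolded One_nat_def] M12[unfolded One_nat_def] M21[unfolded One_nat_def]
  have h: "\<And>i j. i < 3 \<Longrightarrow> j < 3 \<Longrightarrow> mmult 3 M N i j = (if i = j then 1 else 0) \<and> mmult 3 N M i j = (if i = j then 1 else 0)"
    using N unfolding is_minv_def by blast
  fix i :: nat assume i: "i < 3"
  show "N i 0 + N i 1 + N i 2 = (if i = 0 then 1 else 0)" using h[of i 0] i unfolding mm3 by (simp add: Ms)
  show "N i 0 + N i 1 * \<alpha> + N i 2 * \<gamma> = (if i = 1 then 1 else 0)" using h[of i 1] i unfolding mm3 by (simp add: Ms)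
  show "N i 0 + N i 1 * \<beta> + N i 2 * \<delta> = (if i = 2 then 1 else 0)" using h[of i 2] i unfolding mm3 by (simp add: Ms)
qed

lemma rinv4: fixes u v w x :: "'a::ring_1"
  assumes "is_unit u" "is_unit v" "is_unit w" "is_unit x"
  shows "rinv (u * rinv v * w * rinv x) = x * rinv w * v * rinv u"
proof -
  have uv: "is_unit (rinv v)" "is_unit (rinv x)" using assms unit_rinv_unit by auto
  show ?thesis using assms uv by (simp add: unit_mult unit_rinv_unit mult.assoc)
qed

lemma KS:
  fixes a b c d ai bi ci di pi qi ri si :: "'a::ring_1"
  assumes a1: "a*ai = 1" "ai*a = 1" and p1: "(a-1)*pi = 1" "pi*(a-1) = 1"
    and q1: "(b-1)*qi = 1" and b1: "bi*b = 1"
    and r1: "(c-1)*ri = 1" and c1: "ci*c = 1"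
    and s1: "si*(d-1) = 1" and d1: "d*di = 1"
  shows "si*d*((di-1) - (bi-1)*(-(pi*a))*(ci-1))*(ri*c*ai*(a-1)*qi*b) = si*d - ri*c*ai*(a-1)*qi*b"
proof -
  define Y where "Y = ai*(a-1)*qi*b"
  have F1: "si*d*(di-1) = -1"
  proof -
    have "si*d*(di-1) = si*(d*di) - si*d" by (simp add: algebra_simps)
    also have "\<dots> = - (si*(d-1))" using d1 by (simp add: algebra_simps)
    finally show ?thesis using s1 by simp
  qed
  have F2: "(ci-1)*ri*c = -1"
  proof -
    have "ci - 1 = - (ci*(c-1))" using c1 by (simp add: algebra_simps)
    hence "(ci-1)*ri*c = - (ci*((c-1)*ri)*c)" by (simp add: mult.assoc)
    thus ?thesis using r1 c1 by simp
  qed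
  have F3: "pi*a*Y = qi*b"
  proof -
    have "pi*a*Y = pi*(a*ai)*(a-1)*qi*b" unfolding Y_def by (simp add: mult.assoc)
    also have "\<dots> = (pi*(a-1))*qi*b" using a1 by (simp add: mult.assoc)
    finally show ?thesis using p1 by simp
  qed
  have F4: "(bi-1)*(qi*b) = -1"
  proof -
    have "bi - 1 = - (bi*(b-1))" using b1 by (simp add: algebra_simps)
    hence "(bi-1)*(qi*b) = - (bi*((b-1)*qi)*b)" by (simp add: mult.assoc)
    thus ?thesis using q1 b1 by simp
  qed
  have "si*d*((di-1) - (bi-1)*(-(pi*a))*(ci-1))*(ri*c*Y)
      = si*d*(di-1)*(ri*c*Y) + si*d*(bi-1)*(pi*a)*(((ci-1)*ri*c)*Y)"
    by (simp add: algebra_simps)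
  also have "\<dots> = - (ri*c*Y) + si*d*(bi-1)*(- (pi*a*Y))" unfolding F1 F2 by (simp add: mult.assoc)
  also have "\<dots> = - (ri*c*Y) + si*d*(- ((bi-1)*(qi*b)))" unfolding F3 by (simp add: mult.assoc)
  also have "\<dots> = si*d - ri*c*Y" unfolding F4 by simp
  finally show ?thesis unfolding Y_def by (simp add: mult.assoc)
qed

lemma KX: fixes a b c d :: "'a::ring_1"
  assumes ub: "is_unit b" and udb: "is_unit (d-b)"
  shows "rinv (d-c) * (d*rinv b - c*rinv a) * rinv (d*rinv b - 1) * (d-1)
       = rinv (d-c) * (d - c*rinv a*b) * rinv (d-b) * (d-1)"
proof -
  have b1: "b * rinv b = 1" "rinv b * b = 1" using unit_rinv[OF ub] by auto
  have db1: "(d-b) * rinv (d-b) = 1" "rinv (d-b) * (d-b) = 1" using unit_rinv[OF udb] by auto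
  have e: "d*rinv b - 1 = (d-b)*rinv b" using b1 by (simp add: algebra_simps)
  have r: "rinv (d*rinv b - 1) = b * rinv (d-b)"
  proof (rule rinv_eq)
    show "(d * rinv b - 1) * (b * rinv (d - b)) = 1" unfolding e
      using b1 db1 by (simp add: mult.assoc unit_rinv2[OF ub])
    show "b * rinv (d - b) * (d * rinv b - 1) = 1" unfolding e
      using b1 db1 by (simp add: mult.assoc unit_rinv2[OF udb])
  qed
  have "(d*rinv b - c*rinv a) * (b * rinv (d-b)) = (d - c*rinv a*b) * rinv (d-b)"
    using b1 by (simp add: algebra_simps unit_rinv2[OF ub])
  thus ?thesis unfolding r by (simp add: mult.assoc)
qed

lemma sum3_neg: fixes x y z :: "'a::ab_group_add" assumes "x + y + z = 0" shows "y + z = - x"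
  using assms by (metis add.assoc add.commute eq_neg_iff_add_eq_0)

lemma zeta_lem:
  fixes a b c d b00 b01 b02 :: "'a::ring_1"
  assumes h0: "b00 + b01 + b02 = 1" and h1: "b00 + b01*a + b02*c = 0" and h2: "b00 + b01*b + b02*d = 0"
  and ub02: "is_unit b02" and udc: "is_unit (d-c)" and uba: "is_unit (b-a)"
  shows "is_unit (rinv(d-c)*(c-1) - rinv(b-a)*(a-1))"
        "(rinv(d-c)*(c-1) - rinv(b-a)*(a-1)) * b00 = rinv(d-c)*c - rinv(b-a)*a"
proof -
  define dci where "dci = rinv (d-c)"
  define bai where "bai = rinv (b-a)"
  define z where "z = dci*(c-1) - bai*(a-1)"
  have dc1: "(d-c)*dci = 1" "dci*(d-c) = 1" using unit_rinv[OF udc] dci_def by auto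
  have ba1: "(b-a)*bai = 1" "bai*(b-a) = 1" using unit_rinv[OF uba] bai_def by auto
  have e0: "b00 = 1 - b01 - b02" using sum3_eq[OF h0] .
  have k1: "b01*(a-1) + b02*(c-1) = -1" using h1 unfolding e0 by (simp add: algebra_simps)
  have k2: "b01*(b-a) + b02*(d-c) = 0"
  proof -
    have "b01*(b-a) + b02*(d-c) = (b01*b + b02*d) - (b01*a + b02*c)" by (simp add: algebra_simps)
    also have "\<dots> = 0" using sum3_neg[OF h1] sum3_neg[OF h2] by simp
    finally show ?thesis .
  qed
  have b01: "b01 = - (b02*(d-c)*bai)"
  proof -
    have x: "b01*(b-a) = - (b02*(d-c))" using k2 by (simp add: eq_neg_iff_add_eq_0)
    have "b01 = b01*(b-a)*bai" using ba1 by (simp add: mult.assoc)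
    also have "\<dots> = - (b02*(d-c)*bai)" unfolding x by simp
    finally show ?thesis .
  qed
  define P where "P = b02*(d-c)"
  have uP: "is_unit P" "rinv P = dci * rinv b02" unfolding P_def dci_def using ub02 udc by (simp_all add: unit_mult)
  have Pz: "P*z = -1"
  proof -
    have "P*z = b02*((d-c)*dci)*(c-1) - b02*((d-c)*bai)*(a-1)" unfolding P_def z_def
      by (simp add: algebra_simps)
    also have "\<dots> = b02*(c-1) - b02*((d-c)*bai)*(a-1)" using dc1 by simp
    also have "\<dots> = b02*(c-1) + b01*(a-1)" unfolding b01 by (simp add: mult.assoc)
    finally show ?thesis using k1 by (simp add: add.commute)
  qed
  have zz: "z = - rinv P"
  proof -
    have "z = rinv P * (P * z)" using unit_rinv2[OF uP(1)] by simp
    thus ?thesis unfolding Pz by simp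
  qed
  show "is_unit (rinv(d-c)*(c-1) - rinv(b-a)*(a-1))" using zz uP unit_neg unit_rinv_unit
    unfolding z_def dci_def bai_def by metis
  have zb02: "z*b02 = - dci" unfolding zz uP(2) using unit_rinv[OF ub02] by (simp add: mult.assoc)
  have zb01: "z*b01 = bai" unfolding b01
  proof -
    have "z * - (b02 * (d - c) * bai) = - ((z*b02)*(d-c)*bai)" by (simp add: mult.assoc)
    also have "\<dots> = bai" unfolding zb02 using dc1 by (simp add: mult.assoc[symmetric])
    finally show "z * - (b02 * (d - c) * bai) = bai" .
  qed
  have "z*b00 = z - z*b01 - z*b02" unfolding e0 by (simp add: algebra_simps)
  also have "\<dots> = dci*c - bai*a" unfolding zb01 zb02 unfolding z_def by (simp add: algebra_simps)
  finally show "(rinv(d-c)*(c-1) - rinv(b-a)*(a-1)) * b00 = rinv(d-c)*c - rinv(b-a)*a"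
    unfolding z_def dci_def bai_def .
qed

lemma b00_lem:
  fixes a b c d b00 b01 b02 b10 b20 m00 m01 m10 m11 :: "'a::ring_1"
  assumes r0: "b00 + b10 + b20 = 1" and r1: "b00 + a*b10 + b*b20 = 0" and r2: "b00 + c*b10 + d*b20 = 0"
  and c0: "b00 + b01 + b02 = 1" and c1: "b00 + b01*a + b02*c = 0" and c2: "b00 + b01*b + b02*d = 0"
  and n1: "a*m00 + b*m10 = 1" and n2: "a*m01 + b*m11 = 0" and n3: "c*m00 + d*m10 = 0" and n4: "c*m01 + d*m11 = 1"
  and n5: "m00*a + m01*c = 1" and n6: "m00*b + m01*d = 0" and n7: "m10*a + m11*c = 0" and n8: "m10*b + m11*d = 1"
  shows "is_unit b00"
proof -
  have s1: "a*b10 + b*b20 = - b00" using sum3_neg[OF r1] .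
  have s2: "c*b10 + d*b20 = - b00" using sum3_neg[OF r2] .
  have b10: "b10 = - ((m00+m01)*b00)"
  proof -
    have "b10 = (m00*a + m01*c)*b10 + (m00*b + m01*d)*b20" using n5 n6 by simp
    also have "\<dots> = m00*(a*b10 + b*b20) + m01*(c*b10 + d*b20)" by (simp add: algebra_simps)
    also have "\<dots> = - ((m00+m01)*b00)" unfolding s1 s2 by (simp add: algebra_simps)
    finally show ?thesis .
  qed
  have b20: "b20 = - ((m10+m11)*b00)"
  proof -
    have "b20 = (m10*a + m11*c)*b10 + (m10*b + m11*d)*b20" using n7 n8 by simp
    also have "\<dots> = m10*(a*b10 + b*b20) + m11*(c*b10 + d*b20)" by (simp add: algebra_simps)
    also have "\<dots> = - ((m10+m11)*b00)" unfolding s1 s2 by (simp add: algebra_simps)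
    finally show ?thesis .
  qed
  have t1: "b01*a + b02*c = - b00" using sum3_neg[OF c1] .
  have t2: "b01*b + b02*d = - b00" using sum3_neg[OF c2] .
  have b01: "b01 = - (b00*(m00+m10))"
  proof -
    have "b01 = b01*(a*m00 + b*m10) + b02*(c*m00 + d*m10)" using n1 n3 by simp
    also have "\<dots> = (b01*a + b02*c)*m00 + (b01*b + b02*d)*m10" by (simp add: algebra_simps)
    also have "\<dots> = - (b00*(m00+m10))" unfolding t1 t2 by (simp add: algebra_simps)
    finally show ?thesis .
  qed
  have b02: "b02 = - (b00*(m01+m11))"
  proof -
    have "b02 = b01*(a*m01 + b*m11) + b02*(c*m01 + d*m11)" using n2 n4 by simp
    also have "\<dots> = (b01*a + b02*c)*m01 + (b01*b + b02*d)*m11" by (simp add: algebra_simps)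
    also have "\<dots> = - (b00*(m01+m11))" unfolding t1 t2 by (simp add: algebra_simps)
    finally show ?thesis .
  qed
  have 1: "(1 - (m00+m01+m10+m11)) * b00 = 1" using r0 unfolding b10 b20 by (simp add: algebra_simps)
  have 2: "b00 * (1 - (m00+m01+m10+m11)) = 1" using c0 unfolding b01 b02 by (simp add: algebra_simps)
  show ?thesis using unitI[OF 2 1] .
qed

lemma minv_cong:
  fixes M M' N :: "nat \<Rightarrow> nat \<Rightarrow> 'a::ring_1"
  assumes "\<And>i j. i < n \<Longrightarrow> j < n \<Longrightarrow> M i j = M' i j" "is_minv n M N"
  shows "is_minv n M' N"
proof -
  have "mmult n M N i j = mmult n M' N i j" if "i < n" for i j
    unfolding mmult_def using assms(1) that by (intro sum.cong) auto
  moreover have "mmult n N M i j = mmult n N M' i j" if "j < n" for i j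
    unfolding mmult_def using assms(1) that by (intro sum.cong) auto
  ultimately show ?thesis using assms(2) unfolding is_minv_def by simp
qed

lemma K6: fixes X U V W :: "'a::ring_1"
  assumes h3: "1 - X = U*V" and h4: "V*W = 1 - V*U"
  shows "(1 - X)*W = X*U"
proof -
  have "(1 - X)*W = U*(V*W)" unfolding h3 by (simp add: mult.assoc)
  also have "\<dots> = U - (U*V)*U" unfolding h4 by (simp add: algebra_simps)
  also have "\<dots> = X*U" unfolding h3[symmetric] by (simp add: algebra_simps)
  finally show ?thesis .
qed

theorem lemma12:
  fixes A :: "nat \<Rightarrow> nat \<Rightarrow> 'a::ring_1" and a b c d :: 'a
  assumes "A \<in> Shat3"
    and "A 1 1 = a" and "A 1 2 = b" and "A 2 1 = c" and "A 2 2 = d"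
  shows "let \<zeta> = rinv (d - c) * (c - 1) - rinv (b - a) * (a - 1)
         in Phi (Phi A) 1 1
            = rinv \<zeta> * rinv (d - c) * (d * rinv b - c * rinv a) * rinv (d * rinv b - 1) * (d - 1) * \<zeta>"
proof -
  have AS: "A \<in> S3" and AM: "A \<in> Mhat3" using assms(1) unfolding Shat3_def by auto
  have Ah: "A 0 0 = 1" "A 0 1 = 1" "A 0 2 = 1" "A 1 0 = 1" "A 2 0 = 1" using AM unfolding Mhat3_def by auto
  have Av: "A 1 1 = a" "A 1 2 = b" "A 2 1 = c" "A 2 2 = d" using assms by auto
  note Avals = Ah Av Ah(2)[unfolded One_nat_def] Ah(4)[unfolded One_nat_def]
     Av(1)[unfolded One_nat_def] Av(2)[unfolded One_nat_def] Av(3)[unfolded One_nat_def]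
  have sub: "\<And>rs cs. sorted_wrt (<) rs \<Longrightarrow> sorted_wrt (<) cs \<Longrightarrow> length rs = length cs \<Longrightarrow> rs \<noteq> []
      \<Longrightarrow> set rs \<subseteq> {..<3} \<Longrightarrow> set cs \<subseteq> {..<3} \<Longrightarrow> minvertible (length rs) (submat A rs cs)"
    using AS unfolding S3_def by blast
  have J: "minvertible 3 (J2 A)" using AS unfolding S3_def by blast
  have u1: "is_unit (A i j)" if "i < 3" "j < 3" for i j
  proof -
    have "minvertible 1 (submat A [i] [j])" using sub[of "[i]" "[j]"] that by simp
    from unit_from1[OF this] show ?thesis by (simp add: submat_def)
  qed
  have u2: "is_unit (A r1 c1 - A r1 c0 * rinv (A r0 c0) * A r0 c1)"
    if "r0 < r1" "r1 < 3" "c0 < c1" "c1 < 3" "is_unit (A r0 c0)" for r0 r1 c0 c1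
  proof -
    have "minvertible 2 (submat A [r0,r1] [c0,c1])" using sub[of "[r0,r1]" "[c0,c1]"] that by (simp add: numeral_2_eq_2)
    from unit_from2[OF this] that show ?thesis by (simp add: submat_def)
  qed
  have ua: "is_unit a" using u1[of 1 1] Av by simp
  have ub: "is_unit b" using u1[of 1 2] Av by simp
  have uc: "is_unit c" using u1[of 2 1] Av by simp
  have ud: "is_unit d" using u1[of 2 2] Av by simp
  have up: "is_unit (a-1)" using u2[of 0 1 0 1] Avals by (simp add: unit_one)
  have uq: "is_unit (b-1)" using u2[of 0 1 0 2] Avals by (simp add: unit_one)
  have ur: "is_unit (c-1)" using u2[of 0 2 0 1] Avals by (simp add: unit_one)
  have us: "is_unit (d-1)" using u2[of 0 2 0 2] Avals by (simp add: unit_one)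
  have udc: "is_unit (d-c)" using u2[of 0 2 1 2] Avals by (simp add: unit_one)
  have udb: "is_unit (d-b)" using u2[of 1 2 0 2] Avals by (simp add: unit_one)
  have uca: "is_unit (c-a)" using u2[of 1 2 0 1] Avals by (simp add: unit_one)
  have uba: "is_unit (b-a)" using u2[of 0 1 1 2] Avals by (simp add: unit_one)
  have umu: "is_unit (d - c * rinv a * b)" using u2[of 1 2 1 2] Avals ua by simp
  define ai where "ai = rinv a"
  define bi where "bi = rinv b"
  define ci where "ci = rinv c"
  define di where "di = rinv d"
  define pi where "pi = rinv (a-1)"
  define qi where "qi = rinv (b-1)"
  define ri where "ri = rinv (c-1)"
  define si where "si = rinv (d-1)"
  define dci where "dci = rinv (d-c)"
  define dbi where "dbi = rinv (d-b)"
  define bai where "bai = rinv (b-a)"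
  have ia: "a*ai = 1" "ai*a = 1" using unit_rinv[OF ua] ai_def by auto
  have ib: "b*bi = 1" "bi*b = 1" using unit_rinv[OF ub] bi_def by auto
  have ic: "c*ci = 1" "ci*c = 1" using unit_rinv[OF uc] ci_def by auto
  have id: "d*di = 1" "di*d = 1" using unit_rinv[OF ud] di_def by auto
  have ip: "(a-1)*pi = 1" "pi*(a-1) = 1" using unit_rinv[OF up] pi_def by auto
  have iq: "(b-1)*qi = 1" "qi*(b-1) = 1" using unit_rinv[OF uq] qi_def by auto
  have ir: "(c-1)*ri = 1" "ri*(c-1) = 1" using unit_rinv[OF ur] ri_def by auto
  have isd: "(d-1)*si = 1" "si*(d-1) = 1" using unit_rinv[OF us] si_def by auto
  have idc: "(d-c)*dci = 1" "dci*(d-c) = 1" using unit_rinv[OF udc] dci_def by auto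
  have idb: "(d-b)*dbi = 1" "dbi*(d-b) = 1" using unit_rinv[OF udb] dbi_def by auto
  have iba: "(b-a)*bai = 1" "bai*(b-a) = 1" using unit_rinv[OF uba] bai_def by auto
  obtain Mi where Mi: "is_minv 2 (submat A [1,2] [1,2]) Mi"
    using sub[of "[1,2]" "[1,2]"] unfolding minvertible_def by (auto simp: numeral_2_eq_2)
  have Mih: "\<And>i j. i < 2 \<Longrightarrow> j < 2 \<Longrightarrow> mmult 2 (submat A [1,2] [1,2]) Mi i j = (if i = j then 1 else 0)
      \<and> mmult 2 Mi (submat A [1,2] [1,2]) i j = (if i = j then 1 else 0)"
    using Mi unfolding is_minv_def by blast
  note Mih2 = Mih[unfolded mm2 submat_def]
  have n1: "a * Mi 0 0 + b * Mi 1 0 = 1" using Mih2[of 0 0] Avals by simp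
  have n2: "a * Mi 0 1 + b * Mi 1 1 = 0" using Mih2[of 0 1] Avals by simp
  have n3: "c * Mi 0 0 + d * Mi 1 0 = 0" using Mih2[of 1 0] Avals by simp
  have n4: "c * Mi 0 1 + d * Mi 1 1 = 1" using Mih2[of 1 1] Avals by simp
  have n5: "Mi 0 0 * a + Mi 0 1 * c = 1" using Mih2[of 0 0] Avals by simp
  have n6: "Mi 0 0 * b + Mi 0 1 * d = 0" using Mih2[of 0 1] Avals by simp
  have n7: "Mi 1 0 * a + Mi 1 1 * c = 0" using Mih2[of 1 0] Avals by simp
  have n8: "Mi 1 0 * b + Mi 1 1 * d = 1" using Mih2[of 1 1] Avals by simp
  define B where "B = minv 3 A"
  have AB: "is_minv 3 A B"
  proof -
    obtain N where N: "is_minv 3 (submat A [0,1,2] [0,1,2]) N"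
      using sub[of "[0,1,2]" "[0,1,2]"] unfolding minvertible_def by (auto simp: numeral_3_eq_3)
    have "is_minv 3 A N"
      by (rule minv_cong[OF _ N]) (auto simp: submat_def numeral_3_eq_3 numeral_2_eq_2 less_Suc_eq)
    hence "minvertible 3 A" unfolding minvertible_def by blast
    thus ?thesis unfolding B_def by (rule minvertible_minv)
  qed
  note BE = hat_eqs[OF AB Ah Av]
  have R00: "B 0 0 + B 1 0 + B 2 0 = 1" using BE(1)[of 0] by simp
  have R01: "B 0 1 + B 1 1 + B 2 1 = 0" using BE(1)[of 1] by simp
  have R02: "B 0 2 + B 1 2 + B 2 2 = 0" using BE(1)[of 2] by simp
  have R10: "B 0 0 + a * B 1 0 + b * B 2 0 = 0" using BE(2)[of 0] by simp
  have R11: "B 0 1 + a * B 1 1 + b * B 2 1 = 1" using BE(2)[of 1] by simp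
  have R12: "B 0 2 + a * B 1 2 + b * B 2 2 = 0" using BE(2)[of 2] by simp
  have R20: "B 0 0 + c * B 1 0 + d * B 2 0 = 0" using BE(3)[of 0] by simp
  have R21: "B 0 1 + c * B 1 1 + d * B 2 1 = 0" using BE(3)[of 1] by simp
  have R22: "B 0 2 + c * B 1 2 + d * B 2 2 = 1" using BE(3)[of 2] by simp
  have C00: "B 0 0 + B 0 1 + B 0 2 = 1" using BE(4)[of 0] by simp
  have C10: "B 1 0 + B 1 1 + B 1 2 = 0" using BE(4)[of 1] by simp
  have C20: "B 2 0 + B 2 1 + B 2 2 = 0" using BE(4)[of 2] by simp
  have C01: "B 0 0 + B 0 1 * a + B 0 2 * c = 0" using BE(5)[of 0] by simp
  have C11: "B 1 0 + B 1 1 * a + B 1 2 * c = 1" using BE(5)[of 1] by simp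
  have C21: "B 2 0 + B 2 1 * a + B 2 2 * c = 0" using BE(5)[of 2] by simp
  have C02: "B 0 0 + B 0 1 * b + B 0 2 * d = 0" using BE(6)[of 0] by simp
  have C12: "B 1 0 + B 1 1 * b + B 1 2 * d = 0" using BE(6)[of 1] by simp
  have C22: "B 2 0 + B 2 1 * b + B 2 2 * d = 1" using BE(6)[of 2] by simp
  have u00: "is_unit (B 0 0)" by (rule b00_lem[OF R00 R10 R20 C00 C01 C02 n1 n2 n3 n4 n5 n6 n7 n8])
  note P0 = core[OF us udb udc C10 C11 C12 R01 R11 R21 R00 R20]
  have ucd: "is_unit (c-d)" using unit_neg(1)[OF udc] by simp
  have ubd: "is_unit (b-d)" using unit_neg(1)[OF udb] by simp
  have uac: "is_unit (a-c)" using unit_neg(1)[OF uca] by simp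
  have uab: "is_unit (a-b)" using unit_neg(1)[OF uba] by simp
  have sw: "\<And>x y z k::'a. x + y + z = k \<Longrightarrow> x + z + y = k" by (metis add.assoc add.commute)
  note P1 = core[OF ur uca ucd C20 C22 C21 sw[OF R01] sw[OF R11] sw[OF R21] sw[OF R00] sw[OF R20]]
  note P2 = core[OF uq ubd uba sw[OF C10] sw[OF C11] sw[OF C12] R02 R22 R12 R00 R10]
  note P3 = core[OF up uac uab sw[OF C20] sw[OF C22] sw[OF C21] sw[OF R02] sw[OF R22] sw[OF R12] sw[OF R00] sw[OF R10]]
  define b0 where "b0 = B 0 0"
  define k where "k = rinv b0"
  have ik: "b0*k = 1" "k*b0 = 1" using unit_rinv[OF u00] b0_def k_def by auto
  have uk: "is_unit k" "rinv k = b0" using unit_rinv_unit[OF u00] k_def b0_def by auto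
  have PhiA: "Phi A j k' = rinv (B 0 0 * rinv (B k' 0) * B k' j * rinv (B 0 j))" for j k'
    by (simp add: Phi_def J2_def LamL_def B_def)
  have P0u: "is_unit (B 1 1)" "is_unit (B 1 0)" "is_unit (B 0 1)" and P0r: "B 0 1 * rinv (B 1 1) * B 1 0 = B 0 0 - rinv (d-1) * d"
    using P0 by auto
  have P1u: "is_unit (B 2 1)" "is_unit (B 2 0)" "is_unit (B 0 1)" and P1r: "B 0 1 * rinv (B 2 1) * B 2 0 = B 0 0 - rinv (c-1) * c"
    using P1 by auto
  have P2u: "is_unit (B 1 2)" "is_unit (B 1 0)" "is_unit (B 0 2)" and P2r: "B 0 2 * rinv (B 1 2) * B 1 0 = B 0 0 - rinv (b-1) * b"
    using P2 by auto
  have P3u: "is_unit (B 2 2)" "is_unit (B 2 0)" "is_unit (B 0 2)" and P3r: "B 0 2 * rinv (B 2 2) * B 2 0 = B 0 0 - rinv (a-1) * a"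
    using P3 by auto
  have one1: "rinv (x * rinv y * y * rinv x) = 1" if "is_unit x" "is_unit y" for x y :: 'a
    using that by (simp add: mult.assoc unit_rinv2 unit_rinv unit_one)
  have one2: "rinv (x * rinv x * y * rinv y) = 1" if "is_unit x" "is_unit y" for x y :: 'a
    using that by (simp add: mult.assoc unit_rinv2 unit_rinv unit_one)
  have H00: "Phi A 0 0 = 1" unfolding PhiA by (rule one1[OF u00 u00])
  have H01: "Phi A 0 1 = 1" unfolding PhiA by (rule one1[OF u00 P0u(2)])
  have H02: "Phi A 0 2 = 1" unfolding PhiA by (rule one1[OF u00 P1u(2)])
  have H10: "Phi A 1 0 = 1" unfolding PhiA by (rule one2[OF u00 P0u(3)])
  have H20: "Phi A 2 0 = 1" unfolding PhiA by (rule one2[OF u00 P2u(3)])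
  have H11: "Phi A 1 1 = 1 - si*d*k"
  proof -
    have "Phi A 1 1 = B 0 1 * rinv (B 1 1) * B 1 0 * rinv (B 0 0)" unfolding PhiA by (rule rinv4[OF u00 P0u(2) P0u(1) P0u(3)])
    also have "\<dots> = (b0 - si*d)*k" unfolding P0r si_def b0_def k_def ..
    also have "\<dots> = 1 - si*d*k" using ik by (simp add: algebra_simps)
    finally show ?thesis .
  qed
  have H12: "Phi A 1 2 = 1 - ri*c*k"
  proof -
    have "Phi A 1 2 = B 0 1 * rinv (B 2 1) * B 2 0 * rinv (B 0 0)" unfolding PhiA by (rule rinv4[OF u00 P1u(2) P1u(1) P1u(3)])
    also have "\<dots> = (b0 - ri*c)*k" unfolding P1r ri_def b0_def k_def ..
    also have "\<dots> = 1 - ri*c*k" using ik by (simp add: algebra_simps)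
    finally show ?thesis .
  qed
  have H21: "Phi A 2 1 = 1 - qi*b*k"
  proof -
    have "Phi A 2 1 = B 0 2 * rinv (B 1 2) * B 1 0 * rinv (B 0 0)" unfolding PhiA by (rule rinv4[OF u00 P2u(2) P2u(1) P2u(3)])
    also have "\<dots> = (b0 - qi*b)*k" unfolding P2r qi_def b0_def k_def ..
    also have "\<dots> = 1 - qi*b*k" using ik by (simp add: algebra_simps)
    finally show ?thesis .
  qed
  have H22: "Phi A 2 2 = 1 - pi*a*k"
  proof -
    have "Phi A 2 2 = B 0 2 * rinv (B 2 2) * B 2 0 * rinv (B 0 0)" unfolding PhiA by (rule rinv4[OF u00 P3u(2) P3u(1) P3u(3)])
    also have "\<dots> = (b0 - pi*a)*k" unfolding P3r pi_def b0_def k_def ..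
    also have "\<dots> = 1 - pi*a*k" using ik by (simp add: algebra_simps)
    finally show ?thesis .
  qed
  (* Sw is a unit, from the invertibility of J2 A *)
  define Sw where "Sw = si*d - ri*c*ai*(a-1)*qi*b"
  have JA: "J2 A 0 0 = 1" "J2 A 0 1 = 1" "J2 A 0 2 = 1" "J2 A 1 0 = 1" "J2 A 2 0 = 1"
    "J2 A 1 1 = ai" "J2 A 1 2 = ci" "J2 A 2 1 = bi" "J2 A 2 2 = di"
    unfolding J2_def using Avals by (simp_all add: unit_one ai_def bi_def ci_def di_def)
  define GJ where "GJ = minv 3 (J2 A)"
  have GJm: "is_minv 3 (J2 A) GJ" unfolding GJ_def by (rule minvertible_minv[OF J])
  note GE = hat_eqs[OF GJm JA]
  have gR0: "GJ 0 2 + GJ 1 2 + GJ 2 2 = 0" using GE(1)[of 2] by simp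
  have gR1: "GJ 0 2 + ai * GJ 1 2 + ci * GJ 2 2 = 0" using GE(2)[of 2] by simp
  have gR2: "GJ 0 2 + bi * GJ 1 2 + di * GJ 2 2 = 1" using GE(3)[of 2] by simp
  have gC0: "GJ 2 0 + GJ 2 1 + GJ 2 2 = 0" using GE(4)[of 2] by simp
  have gC1: "GJ 2 0 + GJ 2 1 * ai + GJ 2 2 * bi = 0" using GE(5)[of 2] by simp
  have gC2: "GJ 2 0 + GJ 2 1 * ci + GJ 2 2 * di = 1" using GE(6)[of 2] by simp
  have jh1: "(ai-1)*GJ 1 2 + (ci-1)*GJ 2 2 = 0"
  proof -
    have "(ai-1)*GJ 1 2 + (ci-1)*GJ 2 2 = (GJ 0 2 + ai * GJ 1 2 + ci * GJ 2 2) - (GJ 0 2 + GJ 1 2 + GJ 2 2)"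
      by (simp add: algebra_simps)
    also have "\<dots> = 0" unfolding gR0 gR1 by simp
    finally show ?thesis .
  qed
  have jh2: "(bi-1)*GJ 1 2 + (di-1)*GJ 2 2 = 1"
  proof -
    have "(bi-1)*GJ 1 2 + (di-1)*GJ 2 2 = (GJ 0 2 + bi * GJ 1 2 + di * GJ 2 2) - (GJ 0 2 + GJ 1 2 + GJ 2 2)"
      by (simp add: algebra_simps)
    also have "\<dots> = 1" unfolding gR0 gR2 by simp
    finally show ?thesis .
  qed
  have jh3: "GJ 2 1*(ai-1) + GJ 2 2*(bi-1) = 0"
  proof -
    have "GJ 2 1*(ai-1) + GJ 2 2*(bi-1) = (GJ 2 0 + GJ 2 1 * ai + GJ 2 2 * bi) - (GJ 2 0 + GJ 2 1 + GJ 2 2)"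
      by (simp add: algebra_simps)
    also have "\<dots> = 0" unfolding gC0 gC1 by simp
    finally show ?thesis .
  qed
  have jh4: "GJ 2 1*(ci-1) + GJ 2 2*(di-1) = 1"
  proof -
    have "GJ 2 1*(ci-1) + GJ 2 2*(di-1) = (GJ 2 0 + GJ 2 1 * ci + GJ 2 2 * di) - (GJ 2 0 + GJ 2 1 + GJ 2 2)"
      by (simp add: algebra_simps)
    also have "\<dots> = 1" unfolding gC0 gC2 by simp
    finally show ?thesis .
  qed
  have uai: "is_unit ai" "rinv ai = a" using unit_rinv_unit[OF ua] ai_def by auto
  have upi: "is_unit pi" "rinv pi = a-1" using unit_rinv_unit[OF up] pi_def by auto
  have usi: "is_unit si" using unit_rinv_unit[OF us] si_def by auto
  have uri: "is_unit ri" using unit_rinv_unit[OF ur] ri_def by auto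
  have uqi: "is_unit qi" using unit_rinv_unit[OF uq] qi_def by auto
  have ai1: "ai - 1 = - (ai*(a-1))" using ia by (simp add: algebra_simps)
  have uai1: "is_unit (ai - 1)" unfolding ai1 using uai up by (simp add: unit_mult unit_neg)
  have rai1: "rinv (ai - 1) = - (pi*a)" unfolding ai1 using uai up
    by (simp add: unit_mult unit_neg pi_def)
  have usJ: "is_unit ((di-1) - (bi-1)*rinv(ai-1)*(ci-1))" by (rule schur2s(1)[OF uai1 jh1 jh2 jh3 jh4])
  have SwJ: "Sw = si*d*((di-1) - (bi-1)*(-(pi*a))*(ci-1))*(ri*c*ai*(a-1)*qi*b)"
    unfolding Sw_def by (rule KS[OF ia ip iq(1) ib(2) ir(1) ic(2) isd(2) id(1), symmetric])
  have uSw: "is_unit Sw" unfolding SwJ using usJ[unfolded rai1] usi ud uri uc uai up uqi ub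
    by (simp add: unit_mult)
  define H where "H = Phi A"
  have Hv: "H 0 0 = 1" "H 0 1 = 1" "H 0 2 = 1" "H 1 0 = 1" "H 2 0 = 1"
    "H 1 1 = 1 - si*d*k" "H 1 2 = 1 - ri*c*k" "H 2 1 = 1 - qi*b*k" "H 2 2 = 1 - pi*a*k"
    unfolding H_def using H00 H01 H02 H10 H20 H11 H12 H21 H22 by auto
  have kb: "k*(b0*z) = z" "b0*(k*z) = z" for z using ik by (simp_all add: mult.assoc[symmetric])
  have upak: "is_unit (pi*a*k)" using upi ua uk by (simp add: unit_mult)
  have rS: "rinv (- (pi*a*k)) = - (b0*ai*(a-1))"
    using upi ua uk uai by (simp add: unit_mult unit_neg ai_def mult.assoc)
  have tauH: "- (si*d*k) - - (ri*c*k) * rinv (- (pi*a*k)) * - (qi*b*k) = - (Sw*k)"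
    unfolding rS Sw_def by (simp add: algebra_simps kb)
  have uSwk: "is_unit (- (Sw*k))" using uSw uk by (simp add: unit_mult unit_neg)
  have Hinv: "minvertible 3 H"
    by (rule hat_inv[OF Hv(1-5), where p = "- (si*d*k)" and q = "- (ri*c*k)" and r = "- (qi*b*k)" and s = "- (pi*a*k)"])
       (use Hv upak uSwk tauH in \<open>simp_all add: unit_neg\<close>)
  define G where "G = minv 3 H"
  have HG: "is_minv 3 H G" unfolding G_def by (rule minvertible_minv[OF Hinv])
  note GE2 = hat_eqs[OF HG Hv]
  define \<alpha>2 where "\<alpha>2 = 1 - si*d*k"
  define \<beta>2 where "\<beta>2 = 1 - ri*c*k"
  define \<gamma>2 where "\<gamma>2 = 1 - qi*b*k"
  define \<delta>2 where "\<delta>2 = 1 - pi*a*k"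
  note GE2' = GE2[folded \<alpha>2_def \<beta>2_def \<gamma>2_def \<delta>2_def]
  have S00: "G 0 0 + G 1 0 + G 2 0 = 1" using GE2'(1)[of 0] by simp
  have S01: "G 0 1 + G 1 1 + G 2 1 = 0" using GE2'(1)[of 1] by simp
  have S11: "G 0 1 + \<alpha>2 * G 1 1 + \<beta>2 * G 2 1 = 1" using GE2'(2)[of 1] by simp
  have S20: "G 0 0 + \<gamma>2 * G 1 0 + \<delta>2 * G 2 0 = 0" using GE2'(3)[of 0] by simp
  have S21: "G 0 1 + \<gamma>2 * G 1 1 + \<delta>2 * G 2 1 = 0" using GE2'(3)[of 1] by simp
  have T10: "G 1 0 + G 1 1 + G 1 2 = 0" using GE2'(4)[of 1] by simp
  have T11: "G 1 0 + G 1 1 * \<alpha>2 + G 1 2 * \<gamma>2 = 1" using GE2'(5)[of 1] by simp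
  have T12: "G 1 0 + G 1 1 * \<beta>2 + G 1 2 * \<delta>2 = 0" using GE2'(6)[of 1] by simp
  have D1: "\<delta>2 - 1 = - (pi*a*k)" unfolding \<delta>2_def by simp
  have qb: "qi*b = 1 + qi" using iq by (simp add: algebra_simps)
  have rc: "ri*c = 1 + ri" using ir by (simp add: algebra_simps)
  have pa: "pi*a = 1 + pi" using ip by (simp add: algebra_simps)
  have dg: "\<delta>2 - \<gamma>2 = (qi - pi)*k" unfolding \<delta>2_def \<gamma>2_def
  proof -
    have "1 - pi*a*k - (1 - qi*b*k) = (qi*b - pi*a)*k" by (simp add: algebra_simps)
    also have "\<dots> = (qi - pi)*k" unfolding qb pa by simp
    finally show "1 - pi*a*k - (1 - qi*b*k) = (qi - pi)*k" .
  qed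
  have dbb: "\<delta>2 - \<beta>2 = (ri - pi)*k" unfolding \<delta>2_def \<beta>2_def
  proof -
    have "1 - pi*a*k - (1 - ri*c*k) = (ri*c - pi*a)*k" by (simp add: algebra_simps)
    also have "\<dots> = (ri - pi)*k" unfolding rc pa by simp
    finally show "1 - pi*a*k - (1 - ri*c*k) = (ri - pi)*k" .
  qed
  have qpi: "qi - pi = qi*(a-b)*pi"
  proof -
    have "qi*(a-b)*pi = qi*((a-1)*pi) - (qi*(b-1))*pi" by (simp add: algebra_simps)
    thus ?thesis using ip iq by simp
  qed
  have rpi: "ri - pi = ri*(a-c)*pi"
  proof -
    have "ri*(a-c)*pi = ri*((a-1)*pi) - (ri*(c-1))*pi" by (simp add: algebra_simps)
    thus ?thesis using ip ir by simp
  qed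
  have us2: "is_unit (\<delta>2 - 1)" unfolding D1 using upak by (simp add: unit_neg)
  have ub2: "is_unit (\<delta>2 - \<beta>2)" unfolding dbb rpi using uri uac upi uk by (simp add: unit_mult)
  have uc2: "is_unit (\<delta>2 - \<gamma>2)" unfolding dg qpi using uqi uab upi uk by (simp add: unit_mult)
  note Q0 = core[OF us2 ub2 uc2 T10 T11 T12 S01 S11 S21 S00 S20]
  have G11u: "is_unit (G 1 1)" and G11r: "rinv (G 1 1) = (\<alpha>2-1) - (\<beta>2-1)*rinv(\<delta>2-1)*(\<gamma>2-1)"
    and G10: "G 1 0 = - (G 1 1*(\<delta>2-\<beta>2)*rinv(\<delta>2-1))" and G01: "G 0 1 = - (rinv(\<delta>2-1)*(\<delta>2-\<gamma>2)*G 1 1)"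
    and G10u: "is_unit (G 1 0)" and G01u: "is_unit (G 0 1)"
    and Qr: "G 0 1 * rinv (G 1 1) * G 1 0 = G 0 0 - rinv(\<delta>2-1)*\<delta>2"
    using Q0 by auto
  have rD1: "rinv (\<delta>2 - 1) = - (b0*ai*(a-1))" unfolding D1 by (rule rS)
  have tau2: "rinv (G 1 1) = - (Sw*k)"
    unfolding G11r rD1[symmetric] D1 \<alpha>2_def \<beta>2_def \<gamma>2_def using tauH by simp
  define Swi where "Swi = rinv Sw"
  have iSw: "Sw*Swi = 1" "Swi*Sw = 1" using unit_rinv[OF uSw] Swi_def by auto
  have G11v: "G 1 1 = - (b0*Swi)"
  proof -
    have "G 1 1 = rinv (rinv (G 1 1))" using unit_rinv_unit[OF G11u] by simp
    also have "\<dots> = - (b0*Swi)" unfolding tau2 using uSw uk by (simp add: unit_mult unit_neg Swi_def)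
    finally show ?thesis .
  qed
  define Q where "Q = G 0 1 * rinv (G 1 1) * G 1 0"
  have Qv: "Q = - (b0*ai*(a-1)*(qi-pi)*Swi*(ri-pi)*ai*(a-1))"
  proof -
    have g: "G 1 1 * rinv (G 1 1) = 1" using unit_rinv[OF G11u] by simp
    have "Q = rinv(\<delta>2-1)*(\<delta>2-\<gamma>2)*(G 1 1 * rinv (G 1 1))*G 1 1*(\<delta>2-\<beta>2)*rinv(\<delta>2-1)"
      unfolding Q_def G10 G01 by (simp add: mult.assoc)
    also have "\<dots> = rinv(\<delta>2-1)*(\<delta>2-\<gamma>2)*G 1 1*(\<delta>2-\<beta>2)*rinv(\<delta>2-1)" unfolding g by simp
    also have "\<dots> = - (b0*ai*(a-1))*((qi - pi)*k)*(- (b0*Swi))*((ri - pi)*k)*(- (b0*ai*(a-1)))"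
      unfolding rD1 dg dbb G11v ..
    also have "\<dots> = - (b0*ai*(a-1)*(qi-pi)*Swi*(ri-pi)*ai*(a-1))" by (simp add: mult.assoc kb)
    finally show ?thesis .
  qed
  have G00: "G 0 0 = Q + (1 - b0*ai*(a-1))"
  proof -
    have "rinv(\<delta>2-1)*\<delta>2 = rinv(\<delta>2-1)*(\<delta>2 - 1) + rinv(\<delta>2-1)" by (simp add: algebra_simps)
    also have "\<dots> = 1 - b0*ai*(a-1)" using unit_rinv[OF us2] unfolding rD1 by simp
    finally have "rinv(\<delta>2-1)*\<delta>2 = 1 - b0*ai*(a-1)" .
    moreover have "G 0 0 = Q + rinv(\<delta>2-1)*\<delta>2" unfolding Q_def Qr by simp
    ultimately show ?thesis by simp
  qed
  define z where "z = dci*(c-1) - bai*(a-1)"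
  define z0 where "z0 = dci*c - bai*a"
  have uz: "is_unit z" and zb0: "z*b0 = z0"
    using zeta_lem[OF C00 C01 C02 P2u(3) udc uba] unfolding z_def z0_def dci_def bai_def b0_def by auto
  define X where "X = dci*(d - c*ai*b)*dbi*(d-1)"
  have udci: "is_unit dci" using unit_rinv_unit[OF udc] dci_def by auto
  have udbi: "is_unit dbi" using unit_rinv_unit[OF udb] dbi_def by auto
  have uX: "is_unit X" unfolding X_def using udci umu udbi us by (simp add: unit_mult ai_def)
  define t where "t = rinv z * X * z"
  have uzi: "is_unit (rinv z)" using unit_rinv_unit[OF uz] by simp
  have ut: "is_unit t" unfolding t_def using uzi uX uz by (simp add: unit_mult)
  have iz: "z * rinv z = 1" "rinv z * z = 1" using unit_rinv[OF uz] by auto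
  have k2: "z - z0*ai*(a-1) = dci*(c-a)*ai" unfolding z_def z0_def by (rule K2[OF ia])
  have k3: "1 - X = (dci*(c-1)*Sw)*((b-1)*dbi*(d-1))"
    using K3[OF ia isd ir(1) iq idc(2) idb(1)] unfolding X_def Sw_def by (simp add: mult.assoc)
  have k4: "((b-1)*dbi*(d-1))*(z0*ai*(a-1)*(qi - pi)) = 1 - ((b-1)*dbi*(d-1))*(dci*(c-1)*Sw)"
    using K4[OF ia isd ir(1) iq ip idc(2) idc(1) idb iba(2)] unfolding z0_def Sw_def by (simp add: mult.assoc)
  have k6: "(1 - X)*(z0*ai*(a-1)*(qi - pi)) = X*(dci*(c-1)*Sw)" by (rule K6[OF k3 k4])
  have k5: "(c-1)*(ri - pi)*ai*(a-1) = (a-c)*ai" by (rule K5[OF ia ip ir])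
  have FI: "t*(1 - b0*ai*(a-1)) = (1 - t)*Q"
  proof -
    have "t*(1 - b0*ai*(a-1)) = rinv z * X * (z - z*b0*ai*(a-1))" unfolding t_def by (simp add: algebra_simps)
    also have "\<dots> = rinv z * X * (dci*(c-a)*ai)" unfolding zb0 k2 ..
    finally have L: "t*(1 - b0*ai*(a-1)) = rinv z * X * (dci*(c-a)*ai)" .
    have omt: "1 - t = rinv z * (1 - X) * z" unfolding t_def using iz by (simp add: algebra_simps)
    have "(1 - t)*Q = - (rinv z * ((1 - X) * ((z*b0)*ai*(a-1)*(qi-pi))) * Swi*(ri-pi)*ai*(a-1))"
      unfolding omt Qv by (simp add: mult.assoc)
    also have "\<dots> = - (rinv z * (X*(dci*(c-1)*Sw)) * Swi*(ri-pi)*ai*(a-1))" unfolding zb0 k6 ..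
    also have "\<dots> = - (rinv z * X * dci * ((c-1)*(Sw*Swi)*(ri-pi)*ai*(a-1)))" by (simp add: mult.assoc)
    also have "\<dots> = - (rinv z * X * dci * ((a-c)*ai))" unfolding iSw k5[symmetric] by (simp add: mult.assoc)
    finally have R: "(1 - t)*Q = - (rinv z * X * dci * ((a-c)*ai))" .
    have ca: "c - a = - (a - c)" by simp
    show ?thesis unfolding L R by (simp add: algebra_simps)
  qed
  have tG: "t * G 0 0 = Q"
  proof -
    have "t * G 0 0 = t*Q + t*(1 - b0*ai*(a-1))" unfolding G00 by (simp add: algebra_simps)
    also have "\<dots> = Q" unfolding FI by (simp add: algebra_simps)
    finally show ?thesis .
  qed
  have Pone: "Q * rinv (G 1 0) * G 1 1 * rinv (G 0 1) = 1"
    unfolding Q_def using G11u G10u G01u by (simp add: mult.assoc unit_rinv2 unit_rinv)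
  have G00t: "G 0 0 = rinv t * Q"
  proof -
    have "G 0 0 = rinv t * (t * G 0 0)" using unit_rinv2[OF ut] by simp
    thus ?thesis unfolding tG .
  qed
  have fin: "Phi H 1 1 = t"
  proof -
    have "Phi H 1 1 = rinv (G 0 0 * rinv (G 1 0) * G 1 1 * rinv (G 0 1))"
      by (simp add: Phi_def J2_def LamL_def G_def)
    also have "\<dots> = t"
    proof (rule rinv_eq)
      show "G 0 0 * rinv (G 1 0) * G 1 1 * rinv (G 0 1) * t = 1"
      proof -
        have "G 0 0 * rinv (G 1 0) * G 1 1 * rinv (G 0 1) * t = rinv t * (Q * rinv (G 1 0) * G 1 1 * rinv (G 0 1)) * t"
          unfolding G00t by (simp add: mult.assoc)
        thus ?thesis unfolding Pone using unit_rinv[OF ut] by simp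
      qed
      show "t * (G 0 0 * rinv (G 1 0) * G 1 1 * rinv (G 0 1)) = 1"
        using Pone unfolding tG[symmetric] by (simp add: mult.assoc)
    qed
    finally show ?thesis .
  qed
  have XX: "rinv (d-c) * (d*rinv b - c*rinv a) * rinv (d*rinv b - 1) * (d-1) = X"
    unfolding X_def dci_def dbi_def ai_def by (rule KX[OF ub udb])
  show ?thesis unfolding Let_def H_def[symmetric] fin z_def[symmetric] dci_def[symmetric] bai_def[symmetric]
  proof -
    have "rinv z * dci * (d * rinv b - c * rinv a) * rinv (d * rinv b - 1) * (d - 1) * z
        = rinv z * (rinv (d-c) * (d*rinv b - c*rinv a) * rinv (d*rinv b - 1) * (d-1)) * z"
      unfolding dci_def by (simp add: mult.assoc)
    also have "\<dots> = t" unfolding XX t_def ..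
    finally show "t = rinv z * dci * (d * rinv b - c * rinv a) * rinv (d * rinv b - 1) * (d - 1) * z" by simp
  qed
qed

end
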